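(* For $\varepsilon\geq0$, $\mathsf S_\varepsilon$ is an endofunctor of the category of $n$-parameter persistence modules, and for every $n$-parameter persistence module $M$, $d_I(M,\mathsf S_\varepsilon(M))\leq\varepsilon$.
   Context: An $n$-parameter persistence module is a functor $M:(\mathbb{R}^n,\leq)\to\mathbf{Vect}$ (equivalently an $\mathbb{R}^n$-graded module over the monoid ring of $([0,\infty)^n,+)$). The internal translation $\varphi^M_\varepsilon$ is the morphism $M\to M\circ T_\varepsilon$ given at $\vec a$ by $M(\vec a\leq\vec a+\varepsilon\vec1)$, where $T_\varepsilon(\vec a)=\vec a+\varepsilon\vec1$, $\vec1=(1,\dots,1)$ (equivalently, multiplication by $\vec x^{\varepsilon\vec1}$). The $\varepsilon$-simplification is $\mathsf S_\varepsilon(M)=(\mathrm{Im}\,\varphi^M_\varepsilon)\circ T_\varepsilon$, i.e. $\mathsf S_\varepsilon(M)_{\vec a}=\mathrm{Im}(M_{\vec a}\to M_{\vec a+\varepsilon\vec1})$. $M,N$ are $\varepsilon$-interleaved if there are natural maps $M_{\vec a}\to N_{\vec a+\varepsilon\vec1}$, $N_{\vec a}\to M_{\vec a+\varepsilon\vec1}$ whose composites are the internal maps shifting by $2\varepsilon\vec1$; $d_I$ is the infimum of such $\varepsilon$. *)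

theory Defs
  imports "HOL-Analysis.Analysis"
begin

text \<open>An n-parameter persistence module over a field 'k: for each a in R^n a subspace
  sp M a of an ambient 'k-vector space 'v (scalar multiplication s), and for a \<le> b a
  linear map mp M a b carrying sp M a into sp M b, functorial on the carriers.\<close>

record ('n::finite, 'v) pmod =
  sp :: "real^'n \<Rightarrow> 'v set"
  mp :: "real^'n \<Rightarrow> real^'n \<Rightarrow> 'v \<Rightarrow> 'v"

definition shift :: "real \<Rightarrow> real^'n::finite \<Rightarrow> real^'n" where
  "shift e a = a + (\<chi> i. e)"

definition is_pmod :: "('k::field \<Rightarrow> 'v::ab_group_add \<Rightarrow> 'v) \<Rightarrow> ('n::finite, 'v) pmod \<Rightarrow> bool" where
  "is_pmod s M \<longleftrightarrow>
     (\<forall>a. module.subspace s (sp M a)) \<and>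
     (\<forall>a b. a \<le> b \<longrightarrow> Vector_Spaces.linear s s (mp M a b) \<and> mp M a b ` sp M a \<subseteq> sp M b) \<and>
     (\<forall>a x. x \<in> sp M a \<longrightarrow> mp M a a x = x) \<and>
     (\<forall>a b c x. a \<le> b \<longrightarrow> b \<le> c \<longrightarrow> x \<in> sp M a \<longrightarrow> mp M b c (mp M a b x) = mp M a c x)"

definition is_pmorph :: "('k::field \<Rightarrow> 'v::ab_group_add \<Rightarrow> 'v) \<Rightarrow> ('k \<Rightarrow> 'w::ab_group_add \<Rightarrow> 'w) \<Rightarrow>
    ('n::finite, 'v) pmod \<Rightarrow> ('n, 'w) pmod \<Rightarrow> (real^'n \<Rightarrow> 'v \<Rightarrow> 'w) \<Rightarrow> bool" where
  "is_pmorph s1 s2 M N f \<longleftrightarrow>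
     (\<forall>a. Vector_Spaces.linear s1 s2 (f a) \<and> f a ` sp M a \<subseteq> sp N a) \<and>
     (\<forall>a b x. a \<le> b \<longrightarrow> x \<in> sp M a \<longrightarrow> f b (mp M a b x) = mp N a b (f a x))"

definition pmorph_eq :: "('n::finite, 'v) pmod \<Rightarrow> (real^'n \<Rightarrow> 'v \<Rightarrow> 'w) \<Rightarrow> (real^'n \<Rightarrow> 'v \<Rightarrow> 'w) \<Rightarrow> bool" where
  "pmorph_eq M f g \<longleftrightarrow> (\<forall>a. \<forall>x \<in> sp M a. f a x = g a x)"

definition simp_obj :: "real \<Rightarrow> ('n::finite, 'v) pmod \<Rightarrow> ('n, 'v) pmod" where
  "simp_obj e M = \<lparr> sp = (\<lambda>a. mp M a (shift e a) ` sp M a),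
                    mp = (\<lambda>a b. mp M (shift e a) (shift e b)) \<rparr>"

definition simp_mor :: "real \<Rightarrow> (real^'n::finite \<Rightarrow> 'v \<Rightarrow> 'w) \<Rightarrow> (real^'n \<Rightarrow> 'v \<Rightarrow> 'w)" where
  "simp_mor e f = (\<lambda>a. f (shift e a))"

definition interleaved :: "('k::field \<Rightarrow> 'v::ab_group_add \<Rightarrow> 'v) \<Rightarrow> ('k \<Rightarrow> 'w::ab_group_add \<Rightarrow> 'w) \<Rightarrow> real \<Rightarrow>
    ('n::finite, 'v) pmod \<Rightarrow> ('n, 'w) pmod \<Rightarrow> bool" where
  "interleaved s1 s2 e M N \<longleftrightarrow>
    (\<exists>phi psi.
      (\<forall>a. Vector_Spaces.linear s1 s2 (phi a) \<and> phi a ` sp M a \<subseteq> sp N (shift e a)) \<and>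
      (\<forall>a. Vector_Spaces.linear s2 s1 (psi a) \<and> psi a ` sp N a \<subseteq> sp M (shift e a)) \<and>
      (\<forall>a b x. a \<le> b \<longrightarrow> x \<in> sp M a \<longrightarrow>
          phi b (mp M a b x) = mp N (shift e a) (shift e b) (phi a x)) \<and>
      (\<forall>a b y. a \<le> b \<longrightarrow> y \<in> sp N a \<longrightarrow>
          psi b (mp N a b y) = mp M (shift e a) (shift e b) (psi a y)) \<and>
      (\<forall>a. \<forall>x \<in> sp M a. psi (shift e a) (phi a x) = mp M a (shift (2 * e) a) x) \<and>
      (\<forall>a. \<forall>y \<in> sp N a. phi (shift e a) (psi a y) = mp N a (shift (2 * e) a) y))"

text \<open>Interleaving distance (infimum over eps \<ge> 0; +\<infinity> if none).\<close>
definition d_I :: "('k::field \<Rightarrow> 'v::ab_group_add \<Rightarrow> 'v) \<Rightarrow> ('k \<Rightarrow> 'w::ab_group_add \<Rightarrow> 'w) \<Rightarrow>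
    ('n::finite, 'v) pmod \<Rightarrow> ('n, 'w) pmod \<Rightarrow> ereal" where
  "d_I s1 s2 M N = Inf {ereal e | e. e \<ge> 0 \<and> interleaved s1 s2 e M N}"

end

theory Submission
  imports Defs
begin


lemma shift_le: "e \<ge> 0 \<Longrightarrow> a \<le> shift e a"
  by (simp add: shift_def less_eq_vec_def)

lemma shift_mono: "a \<le> b \<Longrightarrow> shift e a \<le> shift e b"
  by (simp add: shift_def less_eq_vec_def)

lemma shift_shift: "shift e (shift d a) = shift (d + e) a"
  by (simp add: shift_def vec_eq_iff)

lemma shift_2: "shift e (shift e a) = shift (2 * e) a"
proof -
  have "e + e = 2 * e" by simp
  then show ?thesis by (simp only: shift_shift)
qed

lemma shift_comm: "shift e (shift d a) = shift d (shift e a)"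
  by (metis shift_shift add.commute)

lemma pmodD:
  assumes "is_pmod s M"
  shows "module.subspace s (sp M a)"
    and "a \<le> b \<Longrightarrow> Vector_Spaces.linear s s (mp M a b)"
    and "a \<le> b \<Longrightarrow> x \<in> sp M a \<Longrightarrow> mp M a b x \<in> sp M b"
    and "x \<in> sp M a \<Longrightarrow> mp M a a x = x"
    and "a \<le> b \<Longrightarrow> b \<le> c \<Longrightarrow> x \<in> sp M a \<Longrightarrow> mp M b c (mp M a b x) = mp M a c x"
  using assms unfolding is_pmod_def by blast+

lemma part1:
  fixes M :: "('n::finite, 'v::ab_group_add) pmod" and s :: "'k::field \<Rightarrow> 'v \<Rightarrow> 'v"
  assumes e: "e \<ge> 0" and "is_pmod s M"
  shows "is_pmod s (simp_obj e M)"
proof -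
  note D = pmodD[OF assms(2)]
  have sub: "module.subspace s (mp M a (shift e a) ` sp M a)" for a
  proof -
    have "Vector_Spaces.linear s s (mp M a (shift e a))" using D(2) shift_le[OF e] .
    then have "module_hom s s (mp M a (shift e a))" by (simp add: module_hom_iff_linear)
    then show ?thesis using module_hom.subspace_image D(1) by blast
  qed
  have maps: "mp M (shift e a) (shift e b) ` (mp M a (shift e a) ` sp M a) \<subseteq> mp M b (shift e b) ` sp M b"
    if ab: "a \<le> b" for a b
  proof
    fix z assume "z \<in> mp M (shift e a) (shift e b) ` (mp M a (shift e a) ` sp M a)"
    then obtain y where y: "y \<in> sp M a" and z: "z = mp M (shift e a) (shift e b) (mp M a (shift e a) y)" by blast
    have "z = mp M a (shift e b) y" using D(5)[OF shift_le[OF e] shift_mono[OF ab] y] z by simp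
    also have "\<dots> = mp M b (shift e b) (mp M a b y)" using D(5)[OF ab shift_le[OF e] y] by simp
    finally show "z \<in> mp M b (shift e b) ` sp M b" using D(3)[OF ab y] by blast
  qed
  have lin: "Vector_Spaces.linear s s (mp M (shift e a) (shift e b))" if "a \<le> b" for a b
    using D(2)[OF shift_mono[OF that]] .
  have idm: "mp M (shift e a) (shift e a) x = x" if "x \<in> mp M a (shift e a) ` sp M a" for a x
    using that D(4) D(3)[OF shift_le[OF e]] by blast
  have comp: "mp M (shift e b) (shift e c) (mp M (shift e a) (shift e b) x) = mp M (shift e a) (shift e c) x"
    if "a \<le> b" "b \<le> c" "x \<in> mp M a (shift e a) ` sp M a" for a b c x
  proof -
    have "x \<in> sp M (shift e a)" using that(3) D(3)[OF shift_le[OF e]] by blast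
    then show ?thesis using D(5)[OF shift_mono[OF that(1)] shift_mono[OF that(2)]] by blast
  qed
  show ?thesis
    unfolding is_pmod_def simp_obj_def pmod.simps
  proof (intro conjI allI impI)
    fix a b :: "real^'n" assume "a \<le> b"
    then show "Vector_Spaces.linear s s (mp M (shift e a) (shift e b))" by (rule lin)
    show "mp M (shift e a) (shift e b) ` (mp M a (shift e a) ` sp M a) \<subseteq> mp M b (shift e b) ` sp M b"
      using maps[OF \<open>a \<le> b\<close>] .
  next
    fix a b c :: "real^'n" and x assume "a \<le> b" "b \<le> c" "x \<in> mp M a (shift e a) ` sp M a"
    then show "mp M (shift e b) (shift e c) (mp M (shift e a) (shift e b) x) = mp M (shift e a) (shift e c) x"
      by (rule comp)
  next
    fix a :: "real^'n" show "module.subspace s (mp M a (shift e a) ` sp M a)" by (rule sub)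
  next
    fix a :: "real^'n" and x assume "x \<in> mp M a (shift e a) ` sp M a"
    then show "mp M (shift e a) (shift e a) x = x" by (rule idm)
  qed
qed

lemma part2:
  assumes e: "e \<ge> 0" and M: "is_pmod s1 M" and N: "is_pmod s2 N" and f: "is_pmorph s1 s2 M N f"
  shows "is_pmorph s1 s2 (simp_obj e M) (simp_obj e N) (simp_mor e f)"
proof -
  note DM = pmodD[OF M] and DN = pmodD[OF N]
  have F1: "Vector_Spaces.linear s1 s2 (f a)" "x \<in> sp M a \<Longrightarrow> f a x \<in> sp N a" for a x
    using f unfolding is_pmorph_def by blast+
  have F2: "a \<le> b \<Longrightarrow> x \<in> sp M a \<Longrightarrow> f b (mp M a b x) = mp N a b (f a x)" for a b x
    using f unfolding is_pmorph_def by blast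
  show ?thesis
    unfolding is_pmorph_def simp_obj_def simp_mor_def
    apply (simp add: F1)
    apply (intro conjI allI impI)
     apply (auto simp: F2 F1 shift_le[OF e] intro!: imageI)[1]
    apply (clarsimp)
    apply (rule F2[OF shift_mono])
     apply (auto intro!: DM(3) shift_le[OF e])
    done
qed

lemma part5:
  fixes M :: "('n::finite, 'v::ab_group_add) pmod" and s :: "'k::field \<Rightarrow> 'v \<Rightarrow> 'v"
  assumes e: "e \<ge> 0" and M: "is_pmod s M"
  shows "interleaved s s e M (simp_obj e M)"
proof -
  note D = pmodD[OF M]
  have e2: "2 * e \<ge> 0" using e by simp
  have "Vector_Spaces.linear s s (mp M 0 0)" by (rule D(2)) simp
  then have vs: "vector_space s" unfolding Vector_Spaces.linear_def by blast
  show ?thesis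
    unfolding interleaved_def
  proof (rule exI[of _ "\<lambda>a. mp M a (shift (2*e) a)"], rule exI[of _ "\<lambda>a. id"], intro conjI allI ballI impI)
    fix a :: "real^'n"
    show "Vector_Spaces.linear s s (mp M a (shift (2 * e) a))" using D(2) shift_le[OF e2] by blast
    show "mp M a (shift (2 * e) a) ` sp M a \<subseteq> sp (simp_obj e M) (shift e a)"
    proof
      fix z assume "z \<in> mp M a (shift (2 * e) a) ` sp M a"
      then obtain y where y: "y \<in> sp M a" and z: "z = mp M a (shift (2*e) a) y" by blast
      have "z = mp M (shift e a) (shift e (shift e a)) (mp M a (shift e a) y)"
        using D(5)[OF shift_le[OF e] shift_le[OF e] y] z by (simp add: shift_2)
      then show "z \<in> sp (simp_obj e M) (shift e a)"
        unfolding simp_obj_def using D(3)[OF shift_le[OF e] y] by auto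
    qed
    show "Vector_Spaces.linear s s id" using vs by (rule vector_space.linear_id)
    show "id ` sp (simp_obj e M) a \<subseteq> sp M (shift e a)"
      unfolding simp_obj_def using D(3)[OF shift_le[OF e]] by auto
  next
    fix a b :: "real^'n" and x assume ab: "a \<le> b" and x: "x \<in> sp M a"
    have "mp M b (shift (2 * e) b) (mp M a b x) = mp M a (shift (2*e) b) x"
      using D(5)[OF ab shift_le[OF e2] x] .
    also have "\<dots> = mp M (shift (2*e) a) (shift (2*e) b) (mp M a (shift (2 * e) a) x)"
      using D(5)[OF shift_le[OF e2] shift_mono[OF ab] x] by simp
    finally show "mp M b (shift (2 * e) b) (mp M a b x) =
        mp (simp_obj e M) (shift e a) (shift e b) (mp M a (shift (2 * e) a) x)"
      unfolding simp_obj_def by (simp add: shift_2)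
  next
    fix a b :: "real^'n" and y assume "a \<le> b" "y \<in> sp (simp_obj e M) a"
    show "id (mp (simp_obj e M) a b y) = mp M (shift e a) (shift e b) (id y)"
      unfolding simp_obj_def by simp
  next
    fix a :: "real^'n" and x assume x: "x \<in> sp M a"
    show "id (mp M a (shift (2 * e) a) x) = mp M a (shift (2 * e) a) x" by simp
  next
    fix a :: "real^'n" and y assume "y \<in> sp (simp_obj e M) a"
    then obtain x where x: "x \<in> sp M a" and y: "y = mp M a (shift e a) x" unfolding simp_obj_def by auto
    have ye: "y \<in> sp M (shift e a)" using D(3)[OF shift_le[OF e] x] y by simp
    show "mp M (shift e a) (shift (2 * e) (shift e a)) (id y) = mp (simp_obj e M) a (shift (2 * e) a) y"
      unfolding simp_obj_def by (simp add: shift_comm)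
  qed
qed

theorem mainTheorem9:
  fixes e :: real
    and s1 :: "'k::field \<Rightarrow> 'u::ab_group_add \<Rightarrow> 'u"
    and s2 :: "'k \<Rightarrow> 'v::ab_group_add \<Rightarrow> 'v"
    and s3 :: "'k \<Rightarrow> 'w::ab_group_add \<Rightarrow> 'w"
  assumes "e \<ge> 0"
    and "vector_space s1" and "vector_space s2" and "vector_space s3"
  shows
    \<comment> \<open>S_e maps persistence modules to persistence modules\<close>
    "(\<forall>M :: ('n::finite, 'u) pmod. is_pmod s1 M \<longrightarrow> is_pmod s1 (simp_obj e M))
     \<comment> \<open>S_e maps morphisms to morphisms\<close>
   \<and> (\<forall>(M :: ('n, 'u) pmod) (N :: ('n, 'v) pmod) f.
        is_pmod s1 M \<longrightarrow> is_pmod s2 N \<longrightarrow> is_pmorph s1 s2 M N f \<longrightarrow>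
        is_pmorph s1 s2 (simp_obj e M) (simp_obj e N) (simp_mor e f))
     \<comment> \<open>S_e preserves identities\<close>
   \<and> (\<forall>M :: ('n, 'u) pmod. is_pmod s1 M \<longrightarrow>
        pmorph_eq (simp_obj e M) (simp_mor e (\<lambda>a. id)) (\<lambda>a. id))
     \<comment> \<open>S_e preserves composition\<close>
   \<and> (\<forall>(M :: ('n, 'u) pmod) (N :: ('n, 'v) pmod) (P :: ('n, 'w) pmod) f g.
        is_pmod s1 M \<longrightarrow> is_pmod s2 N \<longrightarrow> is_pmod s3 P \<longrightarrow>
        is_pmorph s1 s2 M N f \<longrightarrow> is_pmorph s2 s3 N P g \<longrightarrow>
        pmorph_eq (simp_obj e M) (simp_mor e (\<lambda>a. g a \<circ> f a))
                  (\<lambda>a. simp_mor e g a \<circ> simp_mor e f a))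
     \<comment> \<open>d_I(M, S_e M) \<le> e\<close>
   \<and> (\<forall>M :: ('n, 'u) pmod. is_pmod s1 M \<longrightarrow> d_I s1 s1 M (simp_obj e M) \<le> ereal e)"
  proof (intro conjI allI impI)
  show "is_pmod s1 (simp_obj e M)" if "is_pmod s1 M" for M :: "('n, 'u) pmod"
    using part1 assms(1) that by blast
  show "is_pmorph s1 s2 (simp_obj e M) (simp_obj e N) (simp_mor e f)"
    if "is_pmod s1 M" "is_pmod s2 N" "is_pmorph s1 s2 M N f" for M :: "('n, 'u) pmod" and N :: "('n, 'v) pmod" and f
    using part2 assms(1) that by blast
  show "pmorph_eq (simp_obj e M) (simp_mor e (\<lambda>a. id)) (\<lambda>a. id)" for M :: "('n, 'u) pmod"
    by (simp add: pmorph_eq_def simp_mor_def)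
  show "pmorph_eq (simp_obj e M) (simp_mor e (\<lambda>a. g a \<circ> f a)) (\<lambda>a. simp_mor e g a \<circ> simp_mor e f a)"
    for M :: "('n, 'u) pmod" and f g
    by (simp add: pmorph_eq_def simp_mor_def)
  show "d_I s1 s1 M (simp_obj e M) \<le> ereal e" if "is_pmod s1 M" for M :: "('n, 'u) pmod"
    unfolding d_I_def using part5[OF assms(1) that] assms(1) by (auto intro!: Inf_lower)
qed

end
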